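(* Let $\mathcal{H}$ be a real Hilbert space, $f:\mathcal{H}\to\mathbb{R}$ $\mu$-strongly convex and $L$-smooth with $0<\mu<L<\infty$, $g:\mathcal{H}\to\mathbb{R}\cup\{+\infty\}$ convex, proper and lower semicontinuous, $q=\mu/L$, and $x^\star$ the unique minimizer of $f+g$. Let the Prox-ITEM iterates $z^k$, scalars $A_k$ and the quantities $\mathcal{V}_k$ be as defined in the context. Then for every $k\in\mathbb{N}_0$, $$(L+\mu A_{k+1})\|z^{k+1}-x^\star\|^2\le\mathcal{V}_k.$$
   Context: $\operatorname{Prox}^{\gamma}_g(x)=\operatorname{argmin}_z\big(g(z)+\frac{1}{2\gamma}\|x-z\|^2\big)$. Prox-ITEM from $x^0\in\mathcal{H}$: $A_0=0$, $z^0=x^0$, and for $k\ge0$: $A_{k+1}=\frac{(1+q)A_k+2(1+\sqrt{(1+A_k)(1+qA_k)})}{(1-q)^2}$, $\beta_k=\frac{A_k}{(1-q)A_{k+1}}$, $\delta_k=\sqrt{\frac{A_{k+1}}{1+qA_{k+1}}}$, $y^k=(1-\beta_k)z^k+\beta_kx^k$, $\bar z^{k+1}=(1-q\delta_k)z^k+q\delta_ky^k-\frac{\delta_k}{L}\nabla f(y^k)$, $z^{k+1}=\operatorname{Prox}^{\delta_k/L}_g(\bar z^{k+1})$, $x^{k+1}=y^k-\frac1L\nabla f(y^k)-\frac1{\delta_k}(\bar z^{k+1}-z^{k+1})$. Define $\mathcal{I}_f(x,y)=f(x)-f(y)-\langle\nabla f(y),x-y\rangle-\frac{\mu}{2}\|x-y\|^2-\frac{1}{2(L-\mu)}\|\nabla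 f(x)-\nabla f(y)-\mu(x-y)\|^2$ and $\mathcal{I}_g(x,y,s)=g(x)-g(y)-\langle s,x-y\rangle$. Let $s_g^k=L\delta_{k-1}^{-1}(\bar z^k-z^k)$ for $k\ge1$, $s_g^\star=-\nabla f(x^\star)$, and $\sigma_k=\sqrt{(1+A_k)(1+qA_k)}$. For $k\in\mathbb{N}_0$, $$\mathcal{V}_k=(1-q)A_k\mathcal{I}_f(y^{k-1},x^\star)+qA_k\mathcal{I}_g(x^\star,z^k,s_g^k)+(qA_k+1-\sigma_k)\mathcal{I}_g(z^k,x^\star,s_g^\star)+\frac{A_k}{2L}\|s_g^k-s_g^\star\|^2+(L+\mu A_k)\|z^k-x^\star\|^2,$$ with the conventions $y^{-1}=y^0$, $s_g^0=s_g^1$, $0\cdot(\pm\infty)=0$. *)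

theory Defs
  imports "HOL-Analysis.Analysis" "HOL-Library.Extended_Real"
begin

definition strongly_convex :: "real \<Rightarrow> ('a::real_inner \<Rightarrow> real) \<Rightarrow> bool" where
  "strongly_convex \<mu> f \<longleftrightarrow> convex_on UNIV (\<lambda>x. f x - \<mu> / 2 * (norm x)\<^sup>2)"

definition L_smooth :: "real \<Rightarrow> ('a::real_inner \<Rightarrow> real) \<Rightarrow> ('a \<Rightarrow> 'a) \<Rightarrow> bool" where
  "L_smooth L f gf \<longleftrightarrow> (\<forall>x. (f has_derivative (\<lambda>h. gf x \<bullet> h)) (at x))
      \<and> (\<forall>x y. norm (gf x - gf y) \<le> L * norm (x - y))"

text \<open>Extended-valued functions g : H -> R union {+inf}, encoded as ereal-valued functions
  never taking the value -inf.\<close>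
definition proper_fun :: "('a \<Rightarrow> ereal) \<Rightarrow> bool" where
  "proper_fun g \<longleftrightarrow> (\<forall>x. g x \<noteq> -\<infinity>) \<and> (\<exists>x. g x \<noteq> \<infinity>)"

definition convex_fun :: "('a::real_vector \<Rightarrow> ereal) \<Rightarrow> bool" where
  "convex_fun g \<longleftrightarrow> (\<forall>x y t. 0 \<le> t \<and> t \<le> 1 \<longrightarrow>
      g ((1 - t) *\<^sub>R x + t *\<^sub>R y) \<le> ereal (1 - t) * g x + ereal t * g y)"

definition lsc_fun :: "('a::topological_space \<Rightarrow> ereal) \<Rightarrow> bool" where
  "lsc_fun g \<longleftrightarrow> (\<forall>c. closed {x. g x \<le> c})"

definition is_prox :: "('a::real_normed_vector \<Rightarrow> ereal) \<Rightarrow> real \<Rightarrow> 'a \<Rightarrow> 'a \<Rightarrow> bool" where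
  "is_prox g \<gamma> x z \<longleftrightarrow>
     (\<forall>w. g z + ereal ((norm (x - z))\<^sup>2 / (2 * \<gamma>)) \<le> g w + ereal ((norm (x - w))\<^sup>2 / (2 * \<gamma>)))"

fun Aseq :: "real \<Rightarrow> nat \<Rightarrow> real" where
  "Aseq q 0 = 0"
| "Aseq q (Suc k) = ((1 + q) * Aseq q k + 2 * (1 + sqrt ((1 + Aseq q k) * (1 + q * Aseq q k)))) / (1 - q)\<^sup>2"

definition beta_seq :: "real \<Rightarrow> nat \<Rightarrow> real" where
  "beta_seq q k = Aseq q k / ((1 - q) * Aseq q (Suc k))"

definition delta_seq :: "real \<Rightarrow> nat \<Rightarrow> real" where
  "delta_seq q k = sqrt (Aseq q (Suc k) / (1 + q * Aseq q (Suc k)))"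

definition sigma_seq :: "real \<Rightarrow> nat \<Rightarrow> real" where
  "sigma_seq q k = sqrt ((1 + Aseq q k) * (1 + q * Aseq q k))"

definition I_f :: "real \<Rightarrow> real \<Rightarrow> ('a::real_inner \<Rightarrow> real) \<Rightarrow> ('a \<Rightarrow> 'a) \<Rightarrow> 'a \<Rightarrow> 'a \<Rightarrow> real" where
  "I_f \<mu> L f gf x y = f x - f y - gf y \<bullet> (x - y) - \<mu> / 2 * (norm (x - y))\<^sup>2
     - 1 / (2 * (L - \<mu>)) * (norm (gf x - gf y - \<mu> *\<^sub>R (x - y)))\<^sup>2"

definition I_g :: "('a::real_inner \<Rightarrow> ereal) \<Rightarrow> 'a \<Rightarrow> 'a \<Rightarrow> 'a \<Rightarrow> ereal" where
  "I_g g x y s = g x - g y - ereal (s \<bullet> (x - y))"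

text \<open>s_g^k = L / delta_{k-1} (zbar^k - z^k) for k >= 1, with the convention s_g^0 = s_g^1.\<close>
definition s_g :: "real \<Rightarrow> real \<Rightarrow> (nat \<Rightarrow> 'a::real_vector) \<Rightarrow> (nat \<Rightarrow> 'a) \<Rightarrow> nat \<Rightarrow> 'a" where
  "s_g q L zbar z k = (let j = max k 1 in (L / delta_seq q (j - 1)) *\<^sub>R (zbar j - z j))"

text \<open>Lyapunov quantity V_k (ereal-valued; Isabelle's ereal arithmetic has 0 * (+-inf) = 0).
  The convention y^{-1} = y^0 is realised by natural-number subtraction k - 1.\<close>
definition V_seq :: "real \<Rightarrow> real \<Rightarrow> ('a::real_inner \<Rightarrow> real) \<Rightarrow> ('a \<Rightarrow> 'a) \<Rightarrow> ('a \<Rightarrow> ereal)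
    \<Rightarrow> (nat \<Rightarrow> 'a) \<Rightarrow> (nat \<Rightarrow> 'a) \<Rightarrow> (nat \<Rightarrow> 'a) \<Rightarrow> 'a \<Rightarrow> nat \<Rightarrow> ereal" where
  "V_seq \<mu> L f gf g y z zbar xs k =
     (let q = \<mu> / L; A = Aseq q k; sk = s_g q L zbar z k; ss = - gf xs in
       ereal ((1 - q) * A * I_f \<mu> L f gf (y (k - 1)) xs)
       + ereal (q * A) * I_g g xs (z k) sk
       + ereal (q * A + 1 - sigma_seq q k) * I_g g (z k) xs ss
       + ereal (A / (2 * L) * (norm (sk - ss))\<^sup>2)
       + ereal ((L + \<mu> * A) * (norm (z k - xs))\<^sup>2))"

end

theory Submission
  imports Defs
begin


lemma line_deriv:
  assumes "\<forall>x. (f has_derivative (\<lambda>h. gf x \<bullet> h)) (at x)"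
  shows "((\<lambda>t. f (x + t *\<^sub>R d)) has_field_derivative (gf (x + t *\<^sub>R d) \<bullet> d)) (at t within S)"
proof -
  have "((\<lambda>t. x + t *\<^sub>R d) has_derivative (\<lambda>s. s *\<^sub>R d)) (at t within S)"
    by (auto intro!: derivative_eq_intros)
  from has_derivative_compose[OF this assms[rule_format, of "x + t *\<^sub>R d"]]
  have "((\<lambda>t. f (x + t *\<^sub>R d)) has_derivative (\<lambda>s. gf (x + t *\<^sub>R d) \<bullet> (s *\<^sub>R d))) (at t within S)"
    by (simp add: o_def)
  moreover have "(\<lambda>s. gf (x + t *\<^sub>R d) \<bullet> (s *\<^sub>R d)) = (*) (gf (x + t *\<^sub>R d) \<bullet> d)"
    by (auto simp: fun_eq_iff)
  ultimately show ?thesis unfolding has_field_derivative_def by simp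
qed

lemma descent:
  fixes f :: "'a::real_inner \<Rightarrow> real"
  assumes sm: "L_smooth L f gf"
  shows "f y \<le> f x + gf x \<bullet> (y - x) + L/2 * (norm (y - x))^2"
proof -
  define d where "d = y - x"
  define \<phi> where "\<phi> t = f (x + t *\<^sub>R d) - t * (gf x \<bullet> d) - L/2 * t^2 * (norm d)^2" for t
  have der: "\<forall>x. (f has_derivative (\<lambda>h. gf x \<bullet> h)) (at x)" and lip: "\<And>a b. norm (gf a - gf b) \<le> L * norm (a - b)"
    using sm unfolding L_smooth_def by auto
  have "\<phi> 1 \<le> \<phi> 0"
  proof (rule DERIV_nonpos_imp_nonincreasing[of 0 1 \<phi>])
    fix t :: real assume t: "0 \<le> t" "t \<le> 1"
    have D: "(\<phi> has_real_derivative (gf (x + t *\<^sub>R d) \<bullet> d - gf x \<bullet> d - L/2 * (2*t) * (norm d)^2)) (at t)"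
      unfolding \<phi>_def
      by (auto intro!: derivative_eq_intros line_deriv[OF der])
    have "gf (x + t *\<^sub>R d) \<bullet> d - gf x \<bullet> d = (gf (x + t *\<^sub>R d) - gf x) \<bullet> d" by (simp add: inner_diff_left)
    also have "\<dots> \<le> norm (gf (x + t *\<^sub>R d) - gf x) * norm d" by (rule norm_cauchy_schwarz)
    also have "\<dots> \<le> (L * norm (t *\<^sub>R d)) * norm d"
      using lip[of "x + t *\<^sub>R d" x] by (simp add: mult_right_mono)
    also have "\<dots> = L/2 * (2*t) * (norm d)^2" using t by (simp add: power2_eq_square)
    finally show "\<exists>y. (\<phi> has_real_derivative y) (at t) \<and> y \<le> 0" using D by force
  qed simp
  then show ?thesis unfolding \<phi>_def d_def by simp
qed

lemma grad_ineq:
  fixes f :: "'a::real_inner \<Rightarrow> real"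
  assumes sc: "strongly_convex \<mu> f" and sm: "L_smooth L f gf"
  shows "f x + gf x \<bullet> (y - x) + \<mu>/2 * (norm (y - x))^2 \<le> f y"
proof -
  define d where "d = y - x"
  define h where "h w = f w - \<mu> / 2 * (norm w)\<^sup>2" for w
  have hc: "convex_on UNIV h" using sc unfolding strongly_convex_def h_def by simp
  define \<psi> where "\<psi> t = f (x + t *\<^sub>R d) - \<mu>/2 * (x \<bullet> x + 2*t*(x \<bullet> d) + t^2 * (d \<bullet> d))" for t
  have \<psi>h: "\<psi> t = h (x + t *\<^sub>R d)" for t
    unfolding \<psi>_def h_def power2_norm_eq_inner
    by (simp add: inner_add_left inner_add_right inner_commute power2_eq_square algebra_simps)
  have der: "\<forall>x. (f has_derivative (\<lambda>h. gf x \<bullet> h)) (at x)" using sm unfolding L_smooth_def by auto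
  have cv: "convex_on UNIV \<psi>"
  proof (rule convex_onI)
    fix t a b :: real assume t: "0 < t" "t < 1"
    have "(1 - t) *\<^sub>R (x + a *\<^sub>R d) + t *\<^sub>R (x + b *\<^sub>R d) = x + ((1 - t) *\<^sub>R a + t *\<^sub>R b) *\<^sub>R d"
      by (simp add: algebra_simps)
    then have "\<psi> ((1 - t) *\<^sub>R a + t *\<^sub>R b) = h ((1 - t) *\<^sub>R (x + a *\<^sub>R d) + t *\<^sub>R (x + b *\<^sub>R d))"
      unfolding \<psi>h by simp
    also have "\<dots> \<le> (1 - t) * h (x + a *\<^sub>R d) + t * h (x + b *\<^sub>R d)"
      using convex_onD[OF hc, of t] t by simp
    finally show "\<psi> ((1 - t) *\<^sub>R a + t *\<^sub>R b) \<le> (1 - t) * \<psi> a + t * \<psi> b" unfolding \<psi>h .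
  qed simp
  have D: "(\<psi> has_real_derivative (gf x \<bullet> d - \<mu>/2 * (2 * (x \<bullet> d)))) (at 0 within UNIV)"
  proof -
    have "(\<psi> has_real_derivative (gf (x + 0 *\<^sub>R d) \<bullet> d - \<mu>/2 * (0 + 2*1*(x \<bullet> d) + 2*0*(d \<bullet> d)))) (at 0 within UNIV)"
      unfolding \<psi>_def
      by (auto intro!: derivative_eq_intros line_deriv[OF der])
    then show ?thesis by simp
  qed
  have "\<psi> 1 - \<psi> 0 \<ge> (gf x \<bullet> d - \<mu>/2 * (2 * (x \<bullet> d))) * (1 - 0)"
    by (rule convex_on_imp_above_tangent[OF cv]) (use D in auto)
  then show ?thesis unfolding \<psi>_def d_def power2_norm_eq_inner
    by (simp add: inner_diff_left inner_diff_right inner_commute algebra_simps)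
qed

definition IFr :: "real \<Rightarrow> real \<Rightarrow> 'a::real_inner \<Rightarrow> 'a \<Rightarrow> real \<Rightarrow> real \<Rightarrow> 'a \<Rightarrow> 'a \<Rightarrow> real" where
  "IFr \<mu> L X Y fX fY gX gY = fX - fY - gY \<bullet> (X - Y) - \<mu> / 2 * (norm (X - Y))\<^sup>2
     - 1 / (2 * (L - \<mu>)) * (norm (gX - gY - \<mu> *\<^sub>R (X - Y)))\<^sup>2"

definition IGr :: "'a::real_inner \<Rightarrow> 'a \<Rightarrow> real \<Rightarrow> real \<Rightarrow> 'a \<Rightarrow> real" where
  "IGr X Y gX gY sY = gX - gY - sY \<bullet> (X - Y)"

lemmas inner_expand = inner_add_left inner_add_right inner_diff_left inner_diff_right
  inner_scaleR_left inner_scaleR_right inner_minus_left inner_minus_right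

lemma IF_nonneg:
  fixes f :: "'a::real_inner \<Rightarrow> real"
  assumes sc: "strongly_convex \<mu> f" and sm: "L_smooth L f gf" and mL: "\<mu> < L"
  shows "0 \<le> IFr \<mu> L X Y (f X) (f Y) (gf X) (gf Y)"
proof -
  define Lp where "Lp = L - \<mu>"
  have Lp: "0 < Lp" unfolding Lp_def using mL by simp
  define c where "c = 1 / Lp"
  have cLp: "c * Lp = 1" unfolding c_def using Lp by simp
  define h where "h w = f w - \<mu>/2 * (w \<bullet> w)" for w
  define gh where "gh w = gf w - \<mu> *\<^sub>R w" for w
  have hid: "h w - h v - gh v \<bullet> (w - v) = f w - f v - gf v \<bullet> (w - v) - \<mu>/2 * ((w - v) \<bullet> (w - v))" for w v
    unfolding h_def gh_def by (simp add: inner_expand inner_commute algebra_simps)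
  have up: "h w \<le> h v + gh v \<bullet> (w - v) + Lp/2 * ((w - v) \<bullet> (w - v))" for w v
  proof -
    have "f w \<le> f v + gf v \<bullet> (w - v) + L/2 * ((w - v) \<bullet> (w - v))"
      using descent[OF sm, of w v] by (simp add: power2_norm_eq_inner)
    moreover have "Lp/2 * ((w - v) \<bullet> (w - v)) = L/2 * ((w - v) \<bullet> (w - v)) - \<mu>/2 * ((w - v) \<bullet> (w - v))"
      unfolding Lp_def by (simp only: diff_divide_distrib left_diff_distrib)
    ultimately show ?thesis using hid[of w v] by linarith
  qed
  have lo: "h v + gh v \<bullet> (w - v) \<le> h w" for w v
  proof -
    have "f v + gf v \<bullet> (w - v) + \<mu>/2 * ((w - v) \<bullet> (w - v)) \<le> f w"
      using grad_ineq[OF sc sm, of v w] by (simp add: power2_norm_eq_inner)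
    then show ?thesis using hid[of w v] by (simp add: algebra_simps)
  qed
  define G where "G = gh X - gh Y"
  define w where "w = X - c *\<^sub>R G"
  have 1: "h Y + gh Y \<bullet> (w - Y) \<le> h w" by (rule lo)
  have 2: "h w \<le> h X + gh X \<bullet> (w - X) + Lp/2 * ((w - X) \<bullet> (w - X))" by (rule up)
  have e1: "gh Y \<bullet> (w - Y) = gh Y \<bullet> (X - Y) - c * (gh Y \<bullet> G)" unfolding w_def by (simp add: inner_expand)
  have e2: "gh X \<bullet> (w - X) = - (c * (gh X \<bullet> G))" unfolding w_def by (simp add: inner_expand)
  have e3: "Lp/2 * ((w - X) \<bullet> (w - X)) = c/2 * (G \<bullet> G)" unfolding w_def
    using cLp by (simp add: inner_expand power2_eq_square algebra_simps)
  have e4: "c * (gh X \<bullet> G) - c * (gh Y \<bullet> G) = c * (G \<bullet> G)" unfolding G_def by (simp add: inner_expand algebra_simps)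
  have main: "0 \<le> h X - h Y - gh Y \<bullet> (X - Y) - c/2 * (G \<bullet> G)"
    using 1 2 e1 e2 e3 e4 by linarith
  have GG: "G = gf X - gf Y - \<mu> *\<^sub>R (X - Y)" unfolding G_def gh_def by (simp add: algebra_simps)
  have "IFr \<mu> L X Y (f X) (f Y) (gf X) (gf Y) = h X - h Y - gh Y \<bullet> (X - Y) - c/2 * (G \<bullet> G)"
    unfolding IFr_def hid GG[symmetric] c_def Lp_def power2_norm_eq_inner by simp
  then show ?thesis using main by simp
qed

lemma le_small:
  fixes a c :: real
  assumes "\<forall>t. 0 < t \<longrightarrow> t \<le> 1 \<longrightarrow> a \<le> t * c"
  shows "a \<le> 0"
proof (rule ccontr)
  assume "\<not> a \<le> 0"
  then have a: "0 < a" by simp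
  have "a \<le> c" using assms[rule_format, of 1] by simp
  with a have c: "0 < c" by simp
  define t where "t = min 1 (a / (2*c))"
  have t: "0 < t" "t \<le> 1" unfolding t_def using a c by auto
  have "a \<le> t * c" using assms t by simp
  also have "\<dots> \<le> a / (2*c) * c" unfolding t_def using c by (intro mult_right_mono) auto
  also have "\<dots> = a / 2" using c by simp
  finally show False using a by simp
qed

lemma subgrad_from_min:
  fixes g :: "'a::real_inner \<Rightarrow> ereal"
  assumes gc: "convex_fun g" and gpr: "\<forall>w. g w \<noteq> -\<infinity>" and gz: "g z = ereal gz"
    and mn: "\<forall>w. g z + ereal (\<phi> z) \<le> g w + ereal (\<phi> w)"
    and up: "\<forall>w t. 0 < t \<longrightarrow> t \<le> 1 \<longrightarrow> \<phi> ((1-t) *\<^sub>R z + t *\<^sub>R w) \<le> \<phi> z - t * (s \<bullet> (w - z)) + t^2 * K w"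
  shows "ereal (gz + s \<bullet> (w - z)) \<le> g w"
proof (cases "g w")
  case PInf then show ?thesis by simp
next
  case MInf then show ?thesis using gpr by auto
next
  case (real gw)
  have key: "gz + s \<bullet> (w - z) - gw \<le> t * K w" if t: "0 < t" "t \<le> 1" for t
  proof -
    define wt where "wt = (1-t) *\<^sub>R z + t *\<^sub>R w"
    have "g wt \<le> ereal (1 - t) * g z + ereal t * g w"
      using gc t unfolding convex_fun_def wt_def by auto
    then have c: "g wt \<le> ereal ((1-t)*gz + t*gw)" using gz real by simp
    have "g z + ereal (\<phi> z) \<le> g wt + ereal (\<phi> wt)" using mn by simp
    also have "\<dots> \<le> ereal ((1-t)*gz + t*gw) + ereal (\<phi> wt)" using c by (rule add_right_mono)
    finally have "gz + \<phi> z \<le> (1-t)*gz + t*gw + \<phi> wt" using gz by simp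
    moreover have "\<phi> wt \<le> \<phi> z - t * (s \<bullet> (w - z)) + t^2 * K w" using up t unfolding wt_def by simp
    ultimately have "t * (gz + s \<bullet> (w - z) - gw) \<le> t * (t * K w)"
      by (simp add: algebra_simps power2_eq_square)
    then show ?thesis using t by simp
  qed
  have "gz + s \<bullet> (w - z) - gw \<le> 0" by (rule le_small) (use key in auto)
  then show ?thesis using real by simp
qed

lemma prox_subgrad:
  fixes g :: "'a::real_inner \<Rightarrow> ereal"
  assumes gc: "convex_fun g" and gpr: "proper_fun g" and ga: "0 < \<gamma>" and pr: "is_prox g \<gamma> xb z"
  shows "\<exists>gz. g z = ereal gz \<and> (\<forall>w. ereal (gz + ((1/\<gamma>) *\<^sub>R (xb - z)) \<bullet> (w - z)) \<le> g w)"
proof -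
  have ninf: "\<forall>w. g w \<noteq> -\<infinity>" and "\<exists>w. g w \<noteq> \<infinity>" using gpr unfolding proper_fun_def by auto
  then obtain w0 where w0: "g w0 \<noteq> \<infinity>" by auto
  have "g z + ereal ((norm (xb - z))\<^sup>2 / (2 * \<gamma>)) \<le> g w0 + ereal ((norm (xb - w0))\<^sup>2 / (2 * \<gamma>))"
    using pr unfolding is_prox_def by auto
  then have "g z \<noteq> \<infinity>" using w0 ninf by auto
  then obtain gz where gz: "g z = ereal gz" using ninf by (cases "g z") auto
  define \<phi> where "\<phi> w = (norm (xb - w))\<^sup>2 / (2 * \<gamma>)" for w
  define K where "K w = (norm (w - z))\<^sup>2 / (2 * \<gamma>)" for w
  have up: "\<forall>w t. 0 < t \<longrightarrow> t \<le> 1 \<longrightarrow> \<phi> ((1-t) *\<^sub>R z + t *\<^sub>R w) \<le> \<phi> z - t * (((1/\<gamma>) *\<^sub>R (xb - z)) \<bullet> (w - z)) + t^2 * K w"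
  proof (intro allI impI)
    fix w t :: real
    fix w :: 'a
    have "xb - ((1-t) *\<^sub>R z + t *\<^sub>R w) = (xb - z) - t *\<^sub>R (w - z)" by (simp add: algebra_simps)
    then have "\<phi> ((1-t) *\<^sub>R z + t *\<^sub>R w) = \<phi> z - t * (((1/\<gamma>) *\<^sub>R (xb - z)) \<bullet> (w - z)) + t^2 * K w"
      unfolding \<phi>_def K_def power2_norm_eq_inner using ga
      by (simp add: inner_expand inner_commute field_simps power2_eq_square)
    then show "\<phi> ((1-t) *\<^sub>R z + t *\<^sub>R w) \<le> \<phi> z - t * (((1/\<gamma>) *\<^sub>R (xb - z)) \<bullet> (w - z)) + t^2 * K w" by simp
  qed
  have mn: "\<forall>w. g z + ereal (\<phi> z) \<le> g w + ereal (\<phi> w)" using pr unfolding is_prox_def \<phi>_def by auto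
  show ?thesis using subgrad_from_min[OF gc ninf gz mn up] gz by auto
qed

lemma xs_subgrad:
  fixes f :: "'a::real_inner \<Rightarrow> real" and g :: "'a \<Rightarrow> ereal"
  assumes gc: "convex_fun g" and gpr: "proper_fun g" and sm: "L_smooth L f gf"
    and xs_min: "\<forall>w. ereal (f xs) + g xs \<le> ereal (f w) + g w"
  shows "\<exists>gx. g xs = ereal gx \<and> (\<forall>w. ereal (gx + (- gf xs) \<bullet> (w - xs)) \<le> g w)"
proof -
  have ninf: "\<forall>w. g w \<noteq> -\<infinity>" and "\<exists>w. g w \<noteq> \<infinity>" using gpr unfolding proper_fun_def by auto
  then obtain w0 where w0: "g w0 \<noteq> \<infinity>" by auto
  have "ereal (f xs) + g xs \<le> ereal (f w0) + g w0" using xs_min by auto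
  then have "g xs \<noteq> \<infinity>" using w0 ninf by auto
  then obtain gx where gx: "g xs = ereal gx" using ninf by (cases "g xs") auto
  define K where "K w = L/2 * (norm (w - xs))\<^sup>2" for w
  have up: "\<forall>w t. 0 < t \<longrightarrow> t \<le> 1 \<longrightarrow> f ((1-t) *\<^sub>R xs + t *\<^sub>R w) \<le> f xs - t * ((- gf xs) \<bullet> (w - xs)) + t^2 * K w"
  proof (intro allI impI)
    fix w :: 'a and t :: real
    define wt where "wt = (1-t) *\<^sub>R xs + t *\<^sub>R w"
    have e: "wt - xs = t *\<^sub>R (w - xs)" unfolding wt_def by (simp add: algebra_simps)
    have d: "f wt \<le> f xs + gf xs \<bullet> (t *\<^sub>R (w - xs)) + L/2 * (norm (t *\<^sub>R (w - xs)))^2"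
      using descent[OF sm, of wt xs] unfolding e .
    have d1: "gf xs \<bullet> (t *\<^sub>R (w - xs)) = - t * ((- gf xs) \<bullet> (w - xs))" by simp
    have d2: "L/2 * (norm (t *\<^sub>R (w - xs)))^2 = t^2 * K w" unfolding K_def by (simp add: power_mult_distrib)
    show "f ((1-t) *\<^sub>R xs + t *\<^sub>R w) \<le> f xs - t * ((- gf xs) \<bullet> (w - xs)) + t^2 * K w"
      using d d1 d2 unfolding wt_def by linarith
  qed
  have mn: "\<forall>w. g xs + ereal (f xs) \<le> g w + ereal (f w)" using xs_min by (simp add: add.commute)
  show ?thesis using subgrad_from_min[OF gc ninf gx mn up] gx by auto
qed


lemma pieceQ_expand:
 fixes Z b u v Z1 :: "'a::real_inner"
 assumes u: "u = (k*e) *\<^sub>R Z - k *\<^sub>R Z1 - v"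
 shows "-(C * (u\<bullet>Z)) + (A*iL)*(u\<bullet>b) + (A'*iL)*(u\<bullet>u) + q*A*(b\<bullet>Z) + (A*iD)*(b\<bullet>(Z1-Z)) - (2*A'*iD)*(v\<bullet>Z1) + A*iL/2*(b\<bullet>b) + (L+q*L*A)*(Z\<bullet>Z) - (L+q*L*A')*(Z1\<bullet>Z1) - (A*iL/2*((b-v)\<bullet>(b-v)) + ((A'-A/2)*iL)*(v\<bullet>v))
  = (-C*k*e + A'*iL*k^2*e^2 + L + q*L*A)*(Z\<bullet>Z) + (C*k - 2*A'*iL*k^2*e)*(Z\<bullet>Z1) + (C - 2*A'*iL*k*e)*(Z\<bullet>v)
    + (A*iL*k*e + q*A - A*iD)*(Z\<bullet>b) + (A'*iL*k^2 - (L+q*L*A'))*(Z1\<bullet>Z1) + (A*iD - A*iL*k)*(Z1\<bullet>b) + (2*A'*iL*k - 2*A'*iD)*(Z1\<bullet>v)"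
  unfolding u
  by (simp add: inner_expand inner_commute power2_eq_square algebra_simps)

lemma pieceF_expand:
 fixes Z P a b u Y :: "'a::real_inner"
 assumes Y: "Y = (1-\<beta>) *\<^sub>R Z + \<beta> *\<^sub>R (P - iL *\<^sub>R (a + b))"
 shows "(1-q)*A*(Hp - c*((a - \<mu> *\<^sub>R P)\<bullet>(a - \<mu> *\<^sub>R P)))
   - ((1-q)*(A'-A)*(-Hy + u\<bullet>Y - c*(u\<bullet>u))
      + (1-q)*A*(Hp - Hy - u\<bullet>(P - Y) - c*((a - \<mu> *\<^sub>R P - u)\<bullet>(a - \<mu> *\<^sub>R P - u)))
      + (1-q)*A'*(Hy - c*(u\<bullet>u)))
   - (-(((1-q)*A'-A)*(u\<bullet>Z)) + A*iL*(u\<bullet>b) + A'*iL*(u\<bullet>u))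
  = ((1-q)*A'*\<beta> - A)*(u\<bullet>Z) + (2*(1-q)*A*c*\<mu> - (1-q)*A'*\<beta> + (1-q)*A)*(u\<bullet>P)
    + (-2*(1-q)*A*c + (1-q)*A'*\<beta>*iL)*(u\<bullet>a) + ((1-q)*A'*\<beta>*iL - A*iL)*(u\<bullet>b)
    + (2*(1-q)*A'*c - A'*iL)*(u\<bullet>u)"
  unfolding Y
  by (simp add: inner_expand inner_commute power2_eq_square algebra_simps)

lemma core:
  fixes xs z0 z1 p y0 gp gy g0 s s1 :: "'a::real_inner"
    and fp fy f0 gz gz1 gxs q L \<mu> \<delta> A A' \<sigma> \<beta> :: real
  assumes q: "0<q" "q<1" and L: "0<L" and mu: "\<mu> = q*L" and d: "0<\<delta>"
    and R3: "\<delta>^2*(1+q*A') = A'" and R6: "\<delta>*((1-q)*A'-A) = 2*A'*(1-q*\<delta>)"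
    and R7: "1+q*A = (1-q*\<delta>)^2*(1+q*A')" and R4: "\<delta>*(\<sigma>-1) = A"
    and Rb: "\<beta>*((1-q)*A') = A" and A0: "0 \<le> A" and AA: "A \<le> A'"
    and ydef: "y0 = (1-\<beta>) *\<^sub>R z0 + \<beta> *\<^sub>R (p - (1/L) *\<^sub>R (gp + s))"
    and zdef: "z1 = (1-q*\<delta>) *\<^sub>R z0 + (q*\<delta>) *\<^sub>R y0 - (\<delta>/L) *\<^sub>R (gy + s1)"
    and hA: "0 \<le> IFr \<mu> L xs y0 f0 fy g0 gy"
    and hB: "0 \<le> IFr \<mu> L p y0 fp fy gp gy"
    and hC: "0 \<le> IFr \<mu> L y0 xs fy f0 gy g0"
    and hD: "0 \<le> (\<sigma>-1) * IGr z1 z0 gz1 gz s"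
    and hE: "0 \<le> IGr xs z1 gxs gz1 s1"
    and hF: "0 \<le> IGr z1 xs gz1 gxs (-g0)"
  shows "(L+\<mu>*A')*(norm(z1-xs))^2 \<le> (1-q)*A*IFr \<mu> L p xs fp f0 gp g0 + q*A*IGr xs z0 gxs gz s
     + (q*A+1-\<sigma>)*IGr z0 xs gz gxs (-g0) + A/(2*L)*(norm(s - (-g0)))^2 + (L+\<mu>*A)*(norm(z0-xs))^2"
proof -
  define Z where "Z = z0 - xs"
  define P where "P = p - xs"
  define Y where "Y = y0 - xs"
  define Z1 where "Z1 = z1 - xs"
  define a where "a = gp - g0"
  define b where "b = s + g0"
  define v where "v = s1 + g0"
  define u where "u = gy - g0 - \<mu> *\<^sub>R Y"
  define Hp where "Hp = fp - f0 - g0 \<bullet> P - \<mu>/2 * (P \<bullet> P)"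
  define Hy where "Hy = fy - f0 - g0 \<bullet> Y - \<mu>/2 * (Y \<bullet> Y)"
  define Gz where "Gz = gz - gxs + g0 \<bullet> Z"
  define Gz1 where "Gz1 = gz1 - gxs + g0 \<bullet> Z1"
  define c where "c = 1 / (2 * (L - \<mu>))"
  define iL where "iL = 1 / L"
  define iD where "iD = 1 / \<delta>"
  have Lmu: "L - \<mu> = (1-q)*L" using mu by (simp add: algebra_simps)
  have c2: "2*(1-q)*c = iL" unfolding c_def iL_def Lmu using q L by (simp add: field_simps)
  have muiL: "\<mu>*iL = q" unfolding iL_def mu using L by simp
  have LiL: "L*iL = 1" unfolding iL_def using L by simp
  have diD: "\<delta>*iD = 1" unfolding iD_def using d by simp
  have n1: "norm (g0 - gy - \<mu> *\<^sub>R (xs - y0)) = norm u"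
  proof -
    have "g0 - gy - \<mu> *\<^sub>R (xs - y0) = - u" unfolding u_def Y_def by (simp add: algebra_simps)
    then show ?thesis by simp
  qed
  have eA: "IFr \<mu> L xs y0 f0 fy g0 gy = -Hy + u\<bullet>Y - c*(u\<bullet>u)"
    unfolding IFr_def n1 unfolding Hy_def u_def Y_def c_def power2_norm_eq_inner
    by (simp add: inner_expand inner_commute algebra_simps)
  have n2: "gp - gy - \<mu> *\<^sub>R (p - y0) = a - \<mu> *\<^sub>R P - u"
    unfolding a_def P_def u_def Y_def by (simp add: algebra_simps)
  have eB: "IFr \<mu> L p y0 fp fy gp gy = Hp - Hy - u\<bullet>(P - Y) - c*((a - \<mu> *\<^sub>R P - u)\<bullet>(a - \<mu> *\<^sub>R P - u))"
    unfolding IFr_def n2 unfolding power2_norm_eq_inner c_def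
    unfolding Hp_def Hy_def u_def Y_def P_def
    by (simp add: inner_expand inner_commute algebra_simps)
  have n3: "gy - g0 - \<mu> *\<^sub>R (y0 - xs) = u" unfolding u_def Y_def by simp
  have eC: "IFr \<mu> L y0 xs fy f0 gy g0 = Hy - c*(u\<bullet>u)"
    unfolding IFr_def n3 unfolding power2_norm_eq_inner c_def
    unfolding Hy_def Y_def
    by (simp add: inner_expand inner_commute algebra_simps)
  have n4: "gp - g0 - \<mu> *\<^sub>R (p - xs) = a - \<mu> *\<^sub>R P" unfolding a_def P_def by simp
  have eV1: "IFr \<mu> L p xs fp f0 gp g0 = Hp - c*((a - \<mu> *\<^sub>R P)\<bullet>(a - \<mu> *\<^sub>R P))"
    unfolding IFr_def n4 unfolding power2_norm_eq_inner c_def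
    unfolding Hp_def P_def
    by (simp add: inner_expand inner_commute algebra_simps)
  have eD: "IGr z1 z0 gz1 gz s = Gz1 - Gz - b\<bullet>(Z1 - Z)"
    unfolding IGr_def Gz1_def Gz_def b_def Z1_def Z_def by (simp add: inner_expand algebra_simps)
  have eE: "IGr xs z1 gxs gz1 s1 = -Gz1 + v\<bullet>Z1"
    unfolding IGr_def Gz1_def v_def Z1_def by (simp add: inner_expand algebra_simps)
  have eF: "IGr z1 xs gz1 gxs (-g0) = Gz1"
    unfolding IGr_def Gz1_def Z1_def by (simp add: inner_expand algebra_simps)
  have eV2: "IGr xs z0 gxs gz s = -Gz + b\<bullet>Z"
    unfolding IGr_def Gz_def b_def Z_def by (simp add: inner_expand algebra_simps)
  have eV3: "IGr z0 xs gz gxs (-g0) = Gz"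
    unfolding IGr_def Gz_def Z_def by (simp add: inner_expand algebra_simps)
  have Yeq: "Y = (1-\<beta>) *\<^sub>R Z + \<beta> *\<^sub>R (P - iL *\<^sub>R (a + b))"
    unfolding Y_def Z_def P_def a_def b_def iL_def ydef by (simp add: algebra_simps)
  have Z1eq: "Z1 = (1-q*\<delta>) *\<^sub>R Z - (\<delta>*iL) *\<^sub>R (u+v)"
  proof -
    have "Z1 = (1-q*\<delta>) *\<^sub>R Z + (q*\<delta>) *\<^sub>R Y - (\<delta>*iL) *\<^sub>R (gy + s1)"
      unfolding Z1_def Z_def Y_def zdef iL_def by (simp add: algebra_simps)
    also have "gy + s1 = u + v + \<mu> *\<^sub>R Y" unfolding u_def v_def by simp
    also have "(\<delta>*iL) *\<^sub>R (u + v + \<mu> *\<^sub>R Y) = (\<delta>*iL) *\<^sub>R (u + v) + (q*\<delta>) *\<^sub>R Y"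
      using muiL by (simp add: algebra_simps)
    finally show ?thesis by (simp add: algebra_simps)
  qed
  define k where "k = L*iD"
  define e where "e = 1 - q*\<delta>"
  have ueq: "u = (k*e) *\<^sub>R Z - k *\<^sub>R Z1 - v"
  proof -
    have "k *\<^sub>R Z1 = (k*e) *\<^sub>R Z - (k*\<delta>*iL) *\<^sub>R (u+v)"
      unfolding Z1eq e_def by (simp add: algebra_simps)
    moreover have "k*\<delta>*iL = 1" unfolding k_def using diD LiL by (simp add: algebra_simps)
    ultimately show ?thesis by (simp add: algebra_simps)
  qed
  define C where "C = (1-q)*A' - A"
  have F: "(1-q)*A*(Hp - c*((a - \<mu> *\<^sub>R P)\<bullet>(a - \<mu> *\<^sub>R P)))
   - ((1-q)*(A'-A)*(-Hy + u\<bullet>Y - c*(u\<bullet>u))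
      + (1-q)*A*(Hp - Hy - u\<bullet>(P - Y) - c*((a - \<mu> *\<^sub>R P - u)\<bullet>(a - \<mu> *\<^sub>R P - u)))
      + (1-q)*A'*(Hy - c*(u\<bullet>u)))
   = -(C*(u\<bullet>Z)) + A*iL*(u\<bullet>b) + A'*iL*(u\<bullet>u)"
  proof -
    have K1: "(1-q)*A'*\<beta> - A = 0" using Rb by (simp add: algebra_simps)
    have K2: "2*(1-q)*A*c*\<mu> - (1-q)*A'*\<beta> + (1-q)*A = 0"
    proof -
      have "2*(1-q)*A*c*\<mu> = A*(\<mu>*iL)" using c2 by (simp add: algebra_simps)
      then show ?thesis using muiL Rb by (simp add: algebra_simps)
    qed
    have K3: "-2*(1-q)*A*c + (1-q)*A'*\<beta>*iL = 0"
    proof -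
      have "2*(1-q)*A*c = A*iL" using c2 by (simp add: algebra_simps)
      then show ?thesis using Rb by (simp add: algebra_simps)
    qed
    have K4: "(1-q)*A'*\<beta>*iL - A*iL = 0" using Rb by (simp add: algebra_simps)
    have K5: "2*(1-q)*A'*c - A'*iL = 0"
    proof -
      have "2*(1-q)*A'*c = A'*iL" using c2 by (simp add: algebra_simps)
      then show ?thesis by simp
    qed
    have E: "(1-q)*A*(Hp - c*((a - \<mu> *\<^sub>R P)\<bullet>(a - \<mu> *\<^sub>R P)))
   - ((1-q)*(A'-A)*(-Hy + u\<bullet>Y - c*(u\<bullet>u))
      + (1-q)*A*(Hp - Hy - u\<bullet>(P - Y) - c*((a - \<mu> *\<^sub>R P - u)\<bullet>(a - \<mu> *\<^sub>R P - u)))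
      + (1-q)*A'*(Hy - c*(u\<bullet>u)))
   - (-(((1-q)*A'-A)*(u\<bullet>Z)) + A*iL*(u\<bullet>b) + A'*iL*(u\<bullet>u)) = 0"
      using pieceF_expand[OF Yeq, of q A Hp c \<mu> A' Hy u] unfolding K1 K2 K3 K4 K5 by simp
    show ?thesis using E unfolding C_def by linarith
  qed
  have sA: "\<sigma> - 1 = A*iD"
  proof -
    have "\<sigma> - 1 = (\<delta>*iD)*(\<sigma> - 1)" using diD by simp
    also have "\<dots> = iD*(\<delta>*(\<sigma>-1))" by simp
    finally show ?thesis using R4 by simp
  qed
  define \<eta> where "\<eta> = 2*A'*iD"
  define t where "t = \<eta> - (\<sigma> - 1)"
  have G: "q*A*(-Gz + b\<bullet>Z) + (q*A+1-\<sigma>)*Gz - ((\<sigma>-1)*(Gz1 - Gz - b\<bullet>(Z1 - Z)) + \<eta>*(-Gz1 + v\<bullet>Z1) + t*Gz1)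
     = q*A*(b\<bullet>Z) + (A*iD)*(b\<bullet>(Z1-Z)) - (2*A'*iD)*(v\<bullet>Z1)"
    using sA unfolding t_def \<eta>_def by (simp add: algebra_simps)
  have Q: "-(C * (u\<bullet>Z)) + (A*iL)*(u\<bullet>b) + (A'*iL)*(u\<bullet>u) + q*A*(b\<bullet>Z) + (A*iD)*(b\<bullet>(Z1-Z)) - (2*A'*iD)*(v\<bullet>Z1) + A*iL/2*(b\<bullet>b) + (L+q*L*A)*(Z\<bullet>Z) - (L+q*L*A')*(Z1\<bullet>Z1) - (A*iL/2*((b-v)\<bullet>(b-v)) + ((A'-A/2)*iL)*(v\<bullet>v)) = 0"
  proof -
    have kiL: "iL*k = iD" unfolding k_def using LiL by (simp add: algebra_simps)
    have A'iD: "A'*iD^2 = 1 + q*A'"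
    proof -
      have "A'*iD^2 = \<delta>^2*(1+q*A')*iD^2" using R3 by simp
      also have "\<dots> = (\<delta>*iD)^2*(1+q*A')" by (simp add: power_mult_distrib)
      finally show ?thesis using diD by simp
    qed
    have CiD: "C = 2*A'*e*iD"
    proof -
      have "C = (\<delta>*iD)*C" using diD by simp
      also have "\<dots> = iD*(\<delta>*C)" by simp
      also have "\<delta>*C = 2*A'*e" using R6 unfolding C_def e_def by simp
      finally show ?thesis by simp
    qed
    have c1: "-C*k*e + A'*iL*k^2*e^2 + L + q*L*A = 0"
    proof -
      have X1: "A'*iL*k^2*e^2 = (A'*iD*k)*e^2" using kiL by (simp add: power2_eq_square algebra_simps)
      have X2: "C*k*e = 2*(A'*iD*k)*e^2" using CiD by (simp add: power2_eq_square algebra_simps)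
      have X3: "A'*iD*k = L*(1+q*A')" unfolding k_def using A'iD by (simp add: power2_eq_square algebra_simps)
      have X4: "L*((1+q*A')*e^2) = L*(1+q*A)" using R7 unfolding e_def by (simp add: mult.commute)
      have Y1: "A'*iL*k^2*e^2 = L*((1+q*A')*e^2)" unfolding X1 X3 by simp
      have Y2: "C*k*e = 2*(L*((1+q*A')*e^2))" unfolding X2 X3 by simp
      have Y3: "-C*k*e = -(C*k*e)" by simp
      show ?thesis unfolding Y3 Y1 Y2 using X4 by (simp add: algebra_simps)
    qed
    have c2': "C*k - 2*A'*iL*k^2*e = 0"
      using CiD kiL by (simp add: power2_eq_square algebra_simps)
    have c3: "C - 2*A'*iL*k*e = 0" using CiD kiL by (simp add: algebra_simps)
    have c4: "A*iL*k*e + q*A - A*iD = 0"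
    proof -
      have "A*iL*k*e = A*iD*e" using kiL by (simp add: algebra_simps)
      also have "\<dots> = A*iD - q*A*(\<delta>*iD)" unfolding e_def by (simp add: algebra_simps)
      finally show ?thesis using diD by simp
    qed
    have c5: "A'*iL*k^2 - (L+q*L*A') = 0"
    proof -
      have "A'*iL*k^2 = A'*iD*k" using kiL by (simp add: power2_eq_square algebra_simps)
      also have "\<dots> = L*(A'*iD^2)" unfolding k_def by (simp add: power2_eq_square algebra_simps)
      finally show ?thesis using A'iD by (simp add: algebra_simps)
    qed
    have c6: "A*iD - A*iL*k = 0" using kiL by (simp add: algebra_simps)
    have c7: "2*A'*iL*k - 2*A'*iD = 0" using kiL by (simp add: algebra_simps)
    show ?thesis using pieceQ_expand[OF ueq, where C=C and A=A and iL=iL and A'=A' and q=q and iD=iD and L=L and b=b] unfolding c1 c2' c3 c4 c5 c6 c7 by simp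
  qed
  have iD0: "0 \<le> iD" unfolding iD_def using d by simp
  have iL0: "0 \<le> iL" unfolding iL_def using L by simp
  have t0: "0 \<le> t"
  proof -
    have "t = (2*A' - A)*iD" unfolding t_def \<eta>_def sA by (simp add: algebra_simps)
    then show ?thesis using A0 AA iD0 by simp
  qed
  have eta0: "0 \<le> \<eta>" unfolding \<eta>_def using A0 AA iD0 by simp
  have hA': "0 \<le> -Hy + u\<bullet>Y - c*(u\<bullet>u)" using hA eA by simp
  have hB': "0 \<le> Hp - Hy - u\<bullet>(P - Y) - c*((a - \<mu> *\<^sub>R P - u)\<bullet>(a - \<mu> *\<^sub>R P - u))" using hB eB by simp
  have hC': "0 \<le> Hy - c*(u\<bullet>u)" using hC eC by simp
  have hD': "0 \<le> (\<sigma>-1)*(Gz1 - Gz - b\<bullet>(Z1 - Z))" using hD eD by simp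
  have hE': "0 \<le> -Gz1 + v\<bullet>Z1" using hE eE by simp
  have hF': "0 \<le> Gz1" using hF eF by simp
  have p1: "0 \<le> (1-q)*(A'-A)*(-Hy + u\<bullet>Y - c*(u\<bullet>u))" using q AA hA' by simp
  have p2: "0 \<le> (1-q)*A*(Hp - Hy - u\<bullet>(P - Y) - c*((a - \<mu> *\<^sub>R P - u)\<bullet>(a - \<mu> *\<^sub>R P - u)))"
    using q A0 hB' by simp
  have p3: "0 \<le> (1-q)*A'*(Hy - c*(u\<bullet>u))" using q A0 AA hC' by simp
  have p5: "0 \<le> \<eta>*(-Gz1 + v\<bullet>Z1)" using eta0 hE' by simp
  have p6: "0 \<le> t*Gz1" using t0 hF' by simp
  have s1: "0 \<le> A*iL/2*((b-v)\<bullet>(b-v))" using A0 iL0 by simp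
  have s2: "0 \<le> ((A'-A/2)*iL)*(v\<bullet>v)" using A0 AA iL0 by simp
  have nZ1: "(norm(z1-xs))^2 = Z1\<bullet>Z1" unfolding Z1_def by (simp add: power2_norm_eq_inner)
  have nZ: "(norm(z0-xs))^2 = Z\<bullet>Z" unfolding Z_def by (simp add: power2_norm_eq_inner)
  have nb: "(norm(s - (-g0)))^2 = b\<bullet>b" unfolding b_def by (simp add: power2_norm_eq_inner)
  have AL: "A/(2*L) = A*iL/2" unfolding iL_def by simp
  have muA: "\<mu>*A = q*L*A" "\<mu>*A' = q*L*A'" using mu by auto
  show ?thesis unfolding nZ1 nZ nb eV1 eV2 eV3 AL muA
    using F G Q p1 p2 p3 hD' p5 p6 s1 s2 by linarith
qed




lemma Aseq_nonneg: assumes "0 \<le> q" "q < 1" shows "0 \<le> Aseq q k"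
proof (induction k)
  case 0 then show ?case by simp
next
  case (Suc k)
  have "0 \<le> (1 + q) * Aseq q k + 2 * (1 + sqrt ((1 + Aseq q k) * (1 + q * Aseq q k)))"
    using Suc assms by (simp add: add_nonneg_nonneg)
  then show ?case by simp
qed

lemma key_poly:
  fixes q A S :: real
  assumes S2: "S^2 = (1+A)*(1+q*A)"
  shows "((1+q)*A + 2 + 2*S)*(1+q+q*A)^2 = (1+S)^2*((1-q)^2 + q*((1+q)*A + 2 + 2*S))"
  using S2 by algebra

lemma scalars:
  fixes q :: real and k :: nat
  assumes q: "0 < q" "q < 1"
  defines "A \<equiv> Aseq q k" and "A' \<equiv> Aseq q (Suc k)" and "\<sigma> \<equiv> sigma_seq q k"
    and "\<delta> \<equiv> delta_seq q k" and "\<beta> \<equiv> beta_seq q k"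
  shows "0 \<le> A" "A \<le> A'" "0 < A'" "1 \<le> \<sigma>" "0 < \<delta>"
    "\<delta>^2*(1+q*A') = A'" "\<delta>*((1-q)*A'-A) = 2*A'*(1-q*\<delta>)"
    "1+q*A = (1-q*\<delta>)^2*(1+q*A')" "\<delta>*(\<sigma>-1) = A" "\<beta>*((1-q)*A') = A"
proof -
  show A0: "0 \<le> A" unfolding A_def using Aseq_nonneg q by simp
  define S where "S = sqrt ((1+A)*(1+q*A))"
  have Ssig: "\<sigma> = S" unfolding \<sigma>_def S_def sigma_seq_def A_def by simp
  have S2: "S^2 = (1+A)*(1+q*A)" unfolding S_def using A0 q by simp
  have "1*1 \<le> (1+A)*(1+q*A)" using A0 q by (intro mult_mono) auto
  then have S1: "1 \<le> S" unfolding S_def by simp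
  show "1 \<le> \<sigma>" using S1 Ssig by simp
  have q1: "0 < (1-q)^2" using q by simp
  have A'def: "A' = ((1+q)*A + 2 + 2*S)/(1-q)^2" unfolding A'_def A_def S_def by (simp add: algebra_simps)
  have "0 \<le> (1+q)*A" using A0 q by simp
  then have Npos: "0 < (1+q)*A + 2 + 2*S" using S1 by linarith
  show A'pos: "0 < A'" unfolding A'def using Npos q1 by simp
  have "A*(1-q)^2 \<le> (1+q)*A + 2 + 2*S"
  proof -
    have "q*q \<le> q*1" using q by (intro mult_left_mono) auto
    then have "(1-q)^2 \<le> 1+q" using q by (simp add: power2_eq_square algebra_simps)
    then have "A*(1-q)^2 \<le> A*(1+q)" using A0 by (simp add: mult_left_mono)
    then show ?thesis using S1 by (simp add: algebra_simps)
  qed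
  then show "A \<le> A'" unfolding A'def using q1 by (simp add: pos_le_divide_eq)
  define D where "D = 1+q+q*A"
  have "0 \<le> q*A" using A0 q by simp
  then have Dpos: "0 < D" unfolding D_def using q by linarith
  have "0 \<le> q*A'" using A'pos q by simp
  then have qA'pos: "0 < 1 + q*A'" by linarith
  have ratio: "A'/(1+q*A') = ((1+S)/D)^2"
  proof -
    have kp: "((1+q)*A + 2 + 2*S)*D^2 = (1+S)^2*((1-q)^2 + q*((1+q)*A + 2 + 2*S))"
      unfolding D_def by (rule key_poly[OF S2])
    have e1: "(1-q)^2*A' = (1+q)*A + 2 + 2*S" unfolding A'def using q1 by simp
    have "(1-q)^2*(A'*D^2) = (1-q)^2*((1+S)^2*(1+q*A'))"
      using kp unfolding e1[symmetric] by (simp add: algebra_simps)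
    then have "A'*D^2 = (1+S)^2*(1+q*A')" using q1 by simp
    then show ?thesis using Dpos qA'pos by (simp add: field_simps power2_eq_square)
  qed
  have ddef: "\<delta> = (1+S)/D"
  proof -
    have "\<delta> = sqrt (A'/(1+q*A'))" unfolding \<delta>_def delta_seq_def A'_def by simp
    also have "\<dots> = (1+S)/D" unfolding ratio using S1 Dpos by simp
    finally show ?thesis .
  qed
  show dpos: "0 < \<delta>" unfolding ddef using S1 Dpos by simp
  show R3: "\<delta>^2*(1+q*A') = A'" unfolding ddef ratio[symmetric] using qA'pos by simp
  show R4: "\<delta>*(\<sigma>-1) = A"
  proof -
    have "\<delta>*(\<sigma>-1) = (S^2 - 1)/D" unfolding ddef Ssig by (simp add: power2_eq_square algebra_simps)
    also have "\<dots> = A*D/D" unfolding S2 D_def by (simp add: algebra_simps)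
    finally show ?thesis using Dpos by simp
  qed
  have E1: "\<delta>^2*(1+q+q*A) = 2*\<delta> + A"
  proof -
    have "\<delta>*D = 1 + S" unfolding ddef using Dpos by simp
    then have "\<delta>^2*D = \<delta> + \<delta>*S" by (simp add: power2_eq_square algebra_simps) (metis distrib_left mult.commute mult.left_commute mult_1_right)
    then show ?thesis using R4 Ssig unfolding D_def by (simp add: algebra_simps)
  qed
  have F1: "(1+q*A')*(1-q*\<delta>^2) = 1"
  proof -
    have "(1+q*A')*(1-q*\<delta>^2) = 1 + q*(A' - \<delta>^2*(1+q*A'))" by (simp add: algebra_simps)
    then show ?thesis using R3 by simp
  qed
  have F2: "(1+q*A)*(1-q*\<delta>^2) = (1-q*\<delta>)^2"
  proof -
    have "(1+q*A)*(1-q*\<delta>^2) = (1-q*\<delta>)^2 + q*((2*\<delta> + A) - \<delta>^2*(1+q+q*A))"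
      by (simp add: algebra_simps power2_eq_square)
    then show ?thesis using E1 by simp
  qed
  show "1+q*A = (1-q*\<delta>)^2*(1+q*A')"
  proof -
    have "1+q*A = (1+q*A)*((1+q*A')*(1-q*\<delta>^2))" using F1 by simp
    also have "\<dots> = ((1+q*A)*(1-q*\<delta>^2))*(1+q*A')" by (simp add: algebra_simps)
    finally show ?thesis unfolding F2 .
  qed
  show "\<delta>*((1-q)*A'-A) = 2*A'*(1-q*\<delta>)"
  proof -
    have nz: "1-q*\<delta>^2 \<noteq> 0" using F1 by auto
    have "(1-q*\<delta>^2)*(\<delta>*((1-q)*A'-A)) - (1-q*\<delta>^2)*(2*A'*(1-q*\<delta>))
       = (\<delta>*(1-q) - 2*(1-q*\<delta>))*(A' - \<delta>^2*(1+q*A')) - \<delta>*(A + 2*\<delta> - \<delta>^2*(1+q+q*A))"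
      by (simp add: algebra_simps power2_eq_square)
    then have "(1-q*\<delta>^2)*(\<delta>*((1-q)*A'-A)) = (1-q*\<delta>^2)*(2*A'*(1-q*\<delta>))" using R3 E1 by simp
    then show ?thesis using nz by simp
  qed
  show "\<beta>*((1-q)*A') = A" unfolding \<beta>_def beta_seq_def A_def[symmetric] A'_def[symmetric]
    using A'pos q by simp
qed


theorem lemma3:
  fixes f :: "'a::{real_inner, complete_space} \<Rightarrow> real"
    and gf :: "'a \<Rightarrow> 'a"
    and g :: "'a \<Rightarrow> ereal"
    and \<mu> L q :: real
    and x y z zbar :: "nat \<Rightarrow> 'a"
    and xs :: 'a
  assumes mu_pos: "0 < \<mu>" and mu_L: "\<mu> < L"
    and f_sc: "strongly_convex \<mu> f"
    and f_smooth: "L_smooth L f gf"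
    and g_convex: "convex_fun g" and g_proper: "proper_fun g" and g_lsc: "lsc_fun g"
    and q_def: "q = \<mu> / L"
    and xs_min: "\<forall>w. ereal (f xs) + g xs \<le> ereal (f w) + g w"
    and z0: "z 0 = x 0"
    and y_def: "\<forall>k. y k = (1 - beta_seq q k) *\<^sub>R z k + beta_seq q k *\<^sub>R x k"
    and zbar_def: "\<forall>k. zbar (Suc k) = (1 - q * delta_seq q k) *\<^sub>R z k + (q * delta_seq q k) *\<^sub>R y k
                          - (delta_seq q k / L) *\<^sub>R gf (y k)"
    and z_prox: "\<forall>k. is_prox g (delta_seq q k / L) (zbar (Suc k)) (z (Suc k))"
    and x_def: "\<forall>k. x (Suc k) = y k - (1 / L) *\<^sub>R gf (y k)
                          - (1 / delta_seq q k) *\<^sub>R (zbar (Suc k) - z (Suc k))"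
  shows "ereal ((L + \<mu> * Aseq q (Suc k)) * (norm (z (Suc k) - xs))\<^sup>2)
           \<le> V_seq \<mu> L f gf g y z zbar xs k"
  proof -
  have L0: "0 < L" using mu_pos mu_L by linarith
  have q0: "0 < q" "q < 1" unfolding q_def using mu_pos mu_L L0 by simp_all
  have mu: "\<mu> = q*L" using q_def L0 by simp
  define A where "A = Aseq q k"
  define A' where "A' = Aseq q (Suc k)"
  define \<sigma> where "\<sigma> = sigma_seq q k"
  define \<delta> where "\<delta> = delta_seq q k"
  define \<beta> where "\<beta> = beta_seq q k"
  note sc = scalars[OF q0, of k, folded A_def A'_def \<sigma>_def \<delta>_def \<beta>_def]
  have A0: "0 \<le> A" and AA: "A \<le> A'" and A'pos: "0 < A'" and s1: "1 \<le> \<sigma>" and d0: "0 < \<delta>"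
    and R3: "\<delta>^2*(1+q*A') = A'" and R6: "\<delta>*((1-q)*A'-A) = 2*A'*(1-q*\<delta>)"
    and R7: "1+q*A = (1-q*\<delta>)^2*(1+q*A')" and R4: "\<delta>*(\<sigma>-1) = A" and Rb: "\<beta>*((1-q)*A') = A"
    using sc by auto
  define z0 where "z0 = z k"
  define z1 where "z1 = z (Suc k)"
  define p where "p = y (k - 1)"
  define y0 where "y0 = y k"
  define s where "s = s_g q L zbar z k"
  define s1 where "s1 = s_g q L zbar z (Suc k)"
  have s1def: "s1 = (L/\<delta>) *\<^sub>R (zbar (Suc k) - z1)" unfolding s1_def s_g_def z1_def \<delta>_def by simp
  have zdef: "z1 = (1-q*\<delta>) *\<^sub>R z0 + (q*\<delta>) *\<^sub>R y0 - (\<delta>/L) *\<^sub>R (gf y0 + s1)"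
  proof -
    have E1: "(\<delta>/L) *\<^sub>R s1 = zbar (Suc k) - z1" unfolding s1def using d0 L0 by simp
    have E2: "zbar (Suc k) = (1-q*\<delta>) *\<^sub>R z0 + (q*\<delta>) *\<^sub>R y0 - (\<delta>/L) *\<^sub>R gf y0"
      using zbar_def unfolding z0_def y0_def \<delta>_def by blast
    have "z1 = zbar (Suc k) - (\<delta>/L) *\<^sub>R s1" unfolding E1 by simp
    also have "\<dots> = (1-q*\<delta>) *\<^sub>R z0 + (q*\<delta>) *\<^sub>R y0 - (\<delta>/L) *\<^sub>R gf y0 - (\<delta>/L) *\<^sub>R s1"
      unfolding E2 ..
    also have "\<dots> = (1-q*\<delta>) *\<^sub>R z0 + (q*\<delta>) *\<^sub>R y0 - (\<delta>/L) *\<^sub>R (gf y0 + s1)"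
      by (simp only: scaleR_add_right diff_diff_eq)
    finally show ?thesis .
  qed
  have ydef: "y0 = (1-\<beta>) *\<^sub>R z0 + \<beta> *\<^sub>R (p - (1/L) *\<^sub>R (gf p + s))"
  proof (cases k)
    case 0
    then have "\<beta> = 0" unfolding \<beta>_def beta_seq_def by simp
    then show ?thesis using y_def unfolding y0_def z0_def \<beta>_def by simp
  next
    case (Suc j)
    have dj: "0 < delta_seq q j" by (rule scalars(5)[OF q0])
    have sj: "s = (L / delta_seq q j) *\<^sub>R (zbar k - z k)" unfolding s_def s_g_def Suc by simp
    have e1: "(1 / delta_seq q j) *\<^sub>R (zbar k - z k) = (1/L) *\<^sub>R s" unfolding sj using L0 by simp
    have e2: "x k = y j - (1 / L) *\<^sub>R gf (y j) - (1 / delta_seq q j) *\<^sub>R (zbar k - z k)"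
      using x_def unfolding Suc by blast
    have pj: "p = y j" unfolding p_def Suc by simp
    have "x k = p - (1/L) *\<^sub>R gf p - (1/L) *\<^sub>R s" unfolding e2 e1 pj by simp
    then have "x k = p - (1/L) *\<^sub>R (gf p + s)" by (simp only: scaleR_add_right diff_diff_eq)
    then show ?thesis using y_def unfolding y0_def z0_def \<beta>_def by simp
  qed
  obtain gx where gx: "g xs = ereal gx" and gxsub: "\<forall>w. ereal (gx + (- gf xs) \<bullet> (w - xs)) \<le> g w"
    using xs_subgrad[OF g_convex g_proper f_smooth xs_min] by blast
  have gam: "0 < \<delta>/L" using d0 L0 by simp
  obtain gz1 where gz1: "g z1 = ereal gz1"
    and gz1sub: "\<forall>w. ereal (gz1 + ((1/(\<delta>/L)) *\<^sub>R (zbar (Suc k) - z1)) \<bullet> (w - z1)) \<le> g w"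
    using prox_subgrad[OF g_convex g_proper gam, of "zbar (Suc k)" z1] z_prox unfolding z1_def \<delta>_def by blast
  have s1eq: "(1/(\<delta>/L)) *\<^sub>R (zbar (Suc k) - z1) = s1" unfolding s1def by simp
  define gz0 where "gz0 = real_of_ereal (g z0)"
  have z0fin: "g z0 = ereal gz0 \<and> (\<forall>w. ereal (gz0 + s \<bullet> (w - z0)) \<le> g w)" if k1: "k = Suc j" for j
  proof -
    have dj: "0 < delta_seq q j / L" using scalars(5)[OF q0, of j] L0 by simp
    obtain c where c: "g z0 = ereal c"
      and csub: "\<forall>w. ereal (c + ((1/(delta_seq q j / L)) *\<^sub>R (zbar (Suc j) - z (Suc j))) \<bullet> (w - z0)) \<le> g w"
      using prox_subgrad[OF g_convex g_proper dj, of "zbar (Suc j)" "z (Suc j)"] z_prox unfolding z0_def k1 by blast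
    have "(1/(delta_seq q j / L)) *\<^sub>R (zbar (Suc j) - z (Suc j)) = s" unfolding s_def s_g_def k1 by simp
    then show ?thesis using c csub unfolding gz0_def by simp
  qed
  have hA: "0 \<le> IFr \<mu> L xs y0 (f xs) (f y0) (gf xs) (gf y0)" by (rule IF_nonneg[OF f_sc f_smooth mu_L])
  have hB: "0 \<le> IFr \<mu> L p y0 (f p) (f y0) (gf p) (gf y0)" by (rule IF_nonneg[OF f_sc f_smooth mu_L])
  have hC: "0 \<le> IFr \<mu> L y0 xs (f y0) (f xs) (gf y0) (gf xs)" by (rule IF_nonneg[OF f_sc f_smooth mu_L])
  have sig0: "\<sigma> = 1" and A00: "A = 0" if "k = 0" unfolding \<sigma>_def sigma_seq_def A_def that by simp_all
  have hD: "0 \<le> (\<sigma>-1) * IGr z1 z0 gz1 gz0 s"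
  proof (cases k)
    case 0 then show ?thesis using sig0 by simp
  next
    case (Suc j)
    from z0fin[OF Suc] have "ereal (gz0 + s \<bullet> (z1 - z0)) \<le> ereal gz1" using gz1 by metis
    then have "0 \<le> IGr z1 z0 gz1 gz0 s" unfolding IGr_def by simp
    then show ?thesis using s1 by simp
  qed
  have hE: "0 \<le> IGr xs z1 gx gz1 s1"
  proof -
    have "ereal (gz1 + s1 \<bullet> (xs - z1)) \<le> ereal gx" using gz1sub gx unfolding s1eq by metis
    then show ?thesis unfolding IGr_def by simp
  qed
  have hF: "0 \<le> IGr z1 xs gz1 gx (- gf xs)"
  proof -
    have "ereal (gx + (- gf xs) \<bullet> (z1 - xs)) \<le> ereal gz1" using gxsub gz1 by metis
    then show ?thesis unfolding IGr_def by simp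
  qed
  have C: "(L+\<mu>*A')*(norm(z1-xs))^2 \<le> (1-q)*A*IFr \<mu> L p xs (f p) (f xs) (gf p) (gf xs) + q*A*IGr xs z0 gx gz0 s
     + (q*A+1-\<sigma>)*IGr z0 xs gz0 gx (-gf xs) + A/(2*L)*(norm(s - (-gf xs)))^2 + (L+\<mu>*A)*(norm(z0-xs))^2"
    by (rule core[OF q0 L0 mu d0 R3 R6 R7 R4 Rb A0 AA ydef zdef hA hB hC hD hE hF])
  have T2: "ereal (q*A) * I_g g xs z0 s = ereal (q*A*IGr xs z0 gx gz0 s)"
  proof (cases k)
    case 0 then show ?thesis using A00 by (simp add: zero_ereal_def[symmetric])
  next
    case (Suc j)
    then show ?thesis using z0fin[OF Suc] gx unfolding I_g_def IGr_def by simp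
  qed
  have T3: "ereal (q*A+1-\<sigma>) * I_g g z0 xs (- gf xs) = ereal ((q*A+1-\<sigma>)*IGr z0 xs gz0 gx (-gf xs))"
  proof (cases k)
    case 0 then show ?thesis using A00 sig0 by (simp add: zero_ereal_def[symmetric])
  next
    case (Suc j)
    then show ?thesis using z0fin[OF Suc] gx unfolding I_g_def IGr_def by simp
  qed
  have IfI: "I_f \<mu> L f gf p xs = IFr \<mu> L p xs (f p) (f xs) (gf p) (gf xs)" unfolding I_f_def IFr_def by simp
  have V: "V_seq \<mu> L f gf g y z zbar xs k = ereal ((1-q)*A*IFr \<mu> L p xs (f p) (f xs) (gf p) (gf xs)) + ereal (q*A*IGr xs z0 gx gz0 s)
     + ereal ((q*A+1-\<sigma>)*IGr z0 xs gz0 gx (-gf xs)) + ereal (A/(2*L)*(norm(s - (-gf xs)))^2) + ereal ((L+\<mu>*A)*(norm(z0-xs))^2)"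
    unfolding V_seq_def Let_def q_def[symmetric] A_def[symmetric] \<sigma>_def[symmetric]
      s_def[symmetric] z0_def[symmetric] p_def[symmetric] IfI[symmetric] T2[symmetric] T3[symmetric] by simp
  show ?thesis unfolding V z1_def[symmetric] A'_def[symmetric] using C by simp
qed

end
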